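(* Let $f$ be a strongly hyperbolic function, $b>0$ and $s,t\neq0$. Then: (1) $\lim_{x\to\infty}\frac{f'(x)}{f'(x+b)}=1$; (2) $\lim_{x\to+\infty}\frac{f'(x)}{f(x)}=0$; (3) $\lim_{x\to+\infty}\frac{f(x+s)-f(x)}{f'(x)}=s$; (4) $\lim_{x\to+\infty}\frac{f(x+s)-f(x)}{f(x+t)-f(x)}=\frac{s}{t}$; (5) $\liminf_{x\to0+}\frac{f'(x)}{f(x)}=-\infty$.
   Context: $\mathbb{R}^+=(0,\infty)$. A function $f:\mathbb{R}^+\to\mathbb{R}^+$ is strongly hyperbolic if: (1) $\lim_{x\to0+}f(x)=+\infty$ and $\lim_{x\to+\infty}f(x)=0$; (2) $f$ is strictly convex; (3) for each $b\in\mathbb{R}$, $\lim_{x\to+\infty}f(x+b)/f(x)=1$; (4) $f$ is differentiable; (5) $x\mapsto\ln|f'(x)|$ is strictly convex. *)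

theory Defs
  imports "HOL-Analysis.Analysis"
begin

definition strictly_convex_on :: "real set \<Rightarrow> (real \<Rightarrow> real) \<Rightarrow> bool" where
  "strictly_convex_on S f \<longleftrightarrow> convex S \<and>
     (\<forall>x\<in>S. \<forall>y\<in>S. x \<noteq> y \<longrightarrow> (\<forall>u::real. 0 < u \<and> u < 1 \<longrightarrow>
        f ((1 - u) * x + u * y) < (1 - u) * f x + u * f y))"

text \<open>Strongly hyperbolic functions f : (0,oo) -> (0,oo), represented as real functions
  whose values outside (0,oo) are irrelevant.\<close>
definition strongly_hyperbolic :: "(real \<Rightarrow> real) \<Rightarrow> bool" where
  "strongly_hyperbolic f \<longleftrightarrow>
     (\<forall>x>0. f x > 0) \<and>
     filterlim f at_top (at_right 0) \<and>
     (f \<longlongrightarrow> 0) at_top \<and>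
     strictly_convex_on {0<..} f \<and>
     (\<forall>b::real. ((\<lambda>x. f (x + b) / f x) \<longlongrightarrow> 1) at_top) \<and>
     (\<forall>x>0. f differentiable (at x)) \<and>
     strictly_convex_on {0<..} (\<lambda>x. ln \<bar>deriv f x\<bar>)"

end

theory Submission
  imports Defs
begin

lemma sh_pos: "strongly_hyperbolic f \<Longrightarrow> x > 0 \<Longrightarrow> f x > 0"
  unfolding strongly_hyperbolic_def by auto

lemma sh_deriv: "strongly_hyperbolic f \<Longrightarrow> x > 0 \<Longrightarrow> (f has_real_derivative deriv f x) (at x)"
  unfolding strongly_hyperbolic_def using DERIV_deriv_iff_real_differentiable by blast

lemma sh_shift_ratio: "strongly_hyperbolic f \<Longrightarrow> ((\<lambda>x. f (x + c) / f x) \<longlongrightarrow> 1) at_top"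
  unfolding strongly_hyperbolic_def by auto

lemma sh_lim0: "strongly_hyperbolic f \<Longrightarrow> (f \<longlongrightarrow> 0) at_top"
  unfolding strongly_hyperbolic_def by auto

lemma sh_convex: "strongly_hyperbolic f \<Longrightarrow> convex_on {0<..} f"
proof -
  assume sh: "strongly_hyperbolic f"
  hence sc: "strictly_convex_on {0<..} f" unfolding strongly_hyperbolic_def by auto
  show ?thesis
  proof (rule convex_onI)
    fix t x y :: real assume t: "t > 0" "t < 1" and xy: "x \<in> {0<..}" "y \<in> {0<..}"
    show "f ((1 - t) *\<^sub>R x + t *\<^sub>R y) \<le> (1 - t) * f x + t * f y"
    proof (cases "x = y")
      case True thus ?thesis by (simp add: algebra_simps)
    next
      case False
      with sc t xy have "f ((1 - t) * x + t * y) < (1 - t) * f x + t * f y"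
        unfolding strictly_convex_on_def by blast
      thus ?thesis by simp
    qed
  qed auto
qed

lemma shift_lim:
  fixes g :: "real \<Rightarrow> 'a::topological_space"
  assumes "(g \<longlongrightarrow> l) at_top"
  shows "((\<lambda>x. g (x + c)) \<longlongrightarrow> l) at_top"
proof -
  have "filterlim (\<lambda>x. c + x) at_top at_top"
    by (rule filterlim_tendsto_add_at_top[OF tendsto_const filterlim_ident])
  hence "filterlim (\<lambda>x. x + c) at_top at_top" by (simp add: add.commute)
  from filterlim_compose[OF assms this] show ?thesis by (simp add: o_def)
qed

lemma sh_tangent:
  assumes sh: "strongly_hyperbolic f" and x: "x > 0" and y: "y > 0"
  shows "f y - f x \<ge> deriv f x * (y - x)"
proof (rule convex_on_imp_above_tangent[OF sh_convex[OF sh]])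
  show "connected {0::real<..}" by simp
  show "x \<in> interior {0<..}" using x by (simp add: interior_open)
  show "y \<in> {0<..}" using y by simp
  show "(f has_real_derivative deriv f x) (at x within {0<..})"
    using sh_deriv[OF sh x] by (rule has_field_derivative_at_within)
qed

lemma sh_Dneg:
  assumes sh: "strongly_hyperbolic f" and x: "x > 0"
  shows "deriv f x < 0"
proof (rule ccontr)
  assume "\<not> deriv f x < 0"
  hence d: "deriv f x \<ge> 0" by simp
  have "eventually (\<lambda>y. f y < f x) at_top"
    using order_tendstoD(2)[OF sh_lim0[OF sh] sh_pos[OF sh x]] .
  moreover have "eventually (\<lambda>y. y \<ge> x) at_top" by (rule eventually_ge_at_top)
  ultimately have "eventually (\<lambda>y. f y < f x \<and> y \<ge> x) at_top" by eventually_elim auto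
  then obtain y where y: "f y < f x" "y \<ge> x" using eventually_happens'[OF trivial_limit_at_top_linorder] by blast
  have "f y - f x \<ge> deriv f x * (y - x)" using sh_tangent[OF sh x] y x by auto
  moreover have "deriv f x * (y - x) \<ge> 0" using d y by simp
  ultimately show False using y by linarith
qed

lemma sh_Dmono:
  assumes sh: "strongly_hyperbolic f" and x: "x > 0" and xy: "x \<le> y"
  shows "deriv f x \<le> deriv f y"
proof -
  have y: "y > 0" using x xy by simp
  have 1: "f y - f x \<ge> deriv f x * (y - x)" using sh_tangent[OF sh x y] .
  have 2: "f x - f y \<ge> deriv f y * (x - y)" using sh_tangent[OF sh y x] .
  have "(deriv f x - deriv f y) * (y - x) \<le> 0" using 1 2 by (simp add: algebra_simps)
  thus ?thesis using xy
    by (cases "x = y") (auto simp: mult_le_0_iff)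
qed

lemma sh_gconv:
  assumes sh: "strongly_hyperbolic f" and x: "x > 0" and xy: "x \<le> y" and b: "b > 0"
  shows "deriv f y * deriv f (x + b) \<le> deriv f x * deriv f (y + b)"
proof (cases "x = y")
  case True thus ?thesis by simp
next
  case False
  hence xy': "x < y" using xy by simp
  define g where "g = (\<lambda>x. ln \<bar>deriv f x\<bar>)"
  have sc: "strictly_convex_on {0<..} g" using sh unfolding strongly_hyperbolic_def g_def by auto
  define l where "l = b / (y - x + b)"
  have l: "0 < l" "l < 1" using xy' b by (auto simp: l_def field_simps)
  have lb: "l * (y - x + b) = b" using xy' b by (simp add: l_def)
  have "(1 - l) * x + l * (y + b) = x + l * (y - x + b)" by (simp add: algebra_simps)
  hence e1: "(1 - l) * x + l * (y + b) = x + b" using lb by simp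
  have "(1 - (1 - l)) * x + (1 - l) * (y + b) = y + b - l * (y - x + b)" by (simp add: algebra_simps)
  hence e2: "(1 - (1 - l)) * x + (1 - l) * (y + b) = y" using lb by simp
  have ne: "x \<noteq> y + b" using xy' b by simp
  have xp: "x \<in> {0<..}" and yp: "y + b \<in> {0<..}" using x xy' b by auto
  have all: "\<And>u. 0 < u \<Longrightarrow> u < 1 \<Longrightarrow> g ((1 - u) * x + u * (y + b)) < (1 - u) * g x + u * g (y + b)"
    using sc xp yp ne unfolding strictly_convex_on_def by blast
  have i1: "g ((1 - l) * x + l * (y + b)) < (1 - l) * g x + l * g (y + b)"
    by (rule all) (use l in auto)
  have i2: "g ((1 - (1 - l)) * x + (1 - l) * (y + b)) < (1 - (1 - l)) * g x + (1 - l) * g (y + b)"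
    by (rule all) (use l in auto)
  have gg: "g (x + b) + g y < g x + g (y + b)" using i1 i2 unfolding e1 e2 by (simp add: algebra_simps)
  have LL: "ln (\<bar>deriv f (x + b)\<bar> * \<bar>deriv f y\<bar>) < ln (\<bar>deriv f x\<bar> * \<bar>deriv f (y + b)\<bar>)"
    if "g (x + b) + g y < g x + g (y + b)"
  proof -
    have "deriv f (x + b) < 0" "deriv f y < 0" "deriv f x < 0" "deriv f (y + b) < 0"
      using sh_Dneg[OF sh] x xy' b by auto
    note n = this
    have "ln (\<bar>deriv f (x + b)\<bar> * \<bar>deriv f y\<bar>) = ln \<bar>deriv f (x + b)\<bar> + ln \<bar>deriv f y\<bar>"
      by (rule ln_mult_pos) (use n in simp)+
    moreover have "ln (\<bar>deriv f x\<bar> * \<bar>deriv f (y + b)\<bar>) = ln \<bar>deriv f x\<bar> + ln \<bar>deriv f (y + b)\<bar>"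
      by (rule ln_mult_pos) (use n in simp)+
    ultimately show ?thesis using that unfolding g_def by linarith
  qed
  have N: "deriv f (x + b) < 0" "deriv f y < 0" "deriv f x < 0" "deriv f (y + b) < 0"
    using sh_Dneg[OF sh] x xy' b by auto
  have "\<bar>deriv f (x + b)\<bar> * \<bar>deriv f y\<bar> < \<bar>deriv f x\<bar> * \<bar>deriv f (y + b)\<bar>"
  proof -
    have p1: "0 < \<bar>deriv f (x + b)\<bar> * \<bar>deriv f y\<bar>" and p2: "0 < \<bar>deriv f x\<bar> * \<bar>deriv f (y + b)\<bar>"
      using N by (simp_all add: zero_less_mult_iff)
    show ?thesis using ln_less_cancel_iff[OF p1 p2] LL[OF gg] by blast
  qed
  with N show ?thesis by (simp add: abs_mult[symmetric] mult.commute)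
qed

lemma sh_ratio_mono:
  assumes sh: "strongly_hyperbolic f" and x: "x > 0" and xy: "x \<le> y" and b: "b > 0"
  shows "deriv f y / deriv f (y + b) \<le> deriv f x / deriv f (x + b)"
proof -
  have n1: "deriv f (y + b) < 0" and n2: "deriv f (x + b) < 0" using sh_Dneg[OF sh] x xy b by auto
  have "deriv f y * deriv f (x + b) \<le> deriv f x * deriv f (y + b)" by (rule sh_gconv[OF sh x xy b])
  thus ?thesis using n1 n2 by (simp add: divide_simps mult.commute)
qed

lemma sh_no_uniform_gap:
  assumes sh: "strongly_hyperbolic f" and b: "b > 0" and L: "L > 1"
    and gap: "\<And>x. x > 0 \<Longrightarrow> deriv f x / deriv f (x + b) \<ge> L"
  shows False
proof -
  define h where "h = (\<lambda>x. f x - L * f (x + b))"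
  have dle: "deriv f x \<le> L * deriv f (x + b)" if x: "x > 0" for x
  proof -
    have "deriv f (x + b) < 0" using sh_Dneg[OF sh] x b by simp
    thus ?thesis using gap[OF x] by (simp add: le_divide_eq)
  qed
  have hder: "(h has_real_derivative (deriv f x - L * deriv f (x + b))) (at x)" if x: "x > 0" for x
  proof -
    have d: "(f has_real_derivative deriv f (x + b)) (at (x + b))" using sh_deriv[OF sh] x b by simp
    have e: "((\<lambda>x. x + b) has_real_derivative 1) (at x)" by (auto intro!: derivative_eq_intros)
    have "((\<lambda>x. f (x + b)) has_real_derivative deriv f (x + b)) (at x)"
      using DERIV_chain2[OF d e] by simp
    thus ?thesis unfolding h_def
      by (intro DERIV_diff sh_deriv[OF sh x] DERIV_cmult)
  qed
  have hmono: "h y \<le> h x" if x: "x > 0" and xy: "x \<le> y" for x y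
    by (rule DERIV_nonpos_imp_nonincreasing[OF xy])
       (use x hder dle in \<open>metis diff_le_0_iff_le less_le_trans\<close>)
  have hlim: "(h \<longlongrightarrow> 0) at_top"
  proof -
    have "((\<lambda>x. f x - L * f (x + b)) \<longlongrightarrow> 0 - L * 0) at_top"
      by (intro tendsto_intros sh_lim0[OF sh] shift_lim[OF sh_lim0[OF sh]])
    thus ?thesis unfolding h_def by simp
  qed
  have hnn: "h x \<ge> 0" if x: "x > 0" for x
  proof (rule tendsto_upperbound[OF hlim])
    show "\<forall>\<^sub>F y in at_top. h y \<le> h x"
      using eventually_ge_at_top[of x] by eventually_elim (use hmono x in auto)
  qed simp
  have rat: "f (x + b) / f x \<le> 1 / L" if x: "x > 0" for x
  proof -
    have "f x > 0" using sh_pos[OF sh x] .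
    moreover have "L * f (x + b) \<le> f x" using hnn[OF x] unfolding h_def by simp
    ultimately show ?thesis using L by (simp add: divide_simps mult.commute)
  qed
  have "1 \<le> 1 / L"
  proof (rule tendsto_upperbound[OF sh_shift_ratio[OF sh, of b]])
    show "\<forall>\<^sub>F x in at_top. f (x + b) / f x \<le> 1 / L"
      using eventually_gt_at_top[of 0] by eventually_elim (use rat in auto)
  qed simp
  thus False using L by (simp add: divide_simps)
qed

lemma sh_part1:
  assumes sh: "strongly_hyperbolic f" and b: "b > 0"
  shows "((\<lambda>x. deriv f x / deriv f (x + b)) \<longlongrightarrow> 1) at_top"
proof (rule order_tendstoI)
  fix a :: real assume a: "a < 1"
  show "\<forall>\<^sub>F x in at_top. a < deriv f x / deriv f (x + b)"
    using eventually_gt_at_top[of 0]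
  proof eventually_elim
    case (elim x)
    have "deriv f x \<le> deriv f (x + b)" using sh_Dmono[OF sh elim] b by simp
    moreover have "deriv f (x + b) < 0" using sh_Dneg[OF sh] elim b by simp
    ultimately have "1 \<le> deriv f x / deriv f (x + b)" by (simp add: le_divide_eq)
    thus ?case using a by linarith
  qed
next
  fix a :: real assume a: "a > 1"
  obtain x0 where x0: "x0 > 0" "deriv f x0 / deriv f (x0 + b) < a"
    using sh_no_uniform_gap[OF sh b a] by force
  show "\<forall>\<^sub>F x in at_top. deriv f x / deriv f (x + b) < a"
    using eventually_ge_at_top[of x0]
  proof eventually_elim
    case (elim x)
    show ?case using sh_ratio_mono[OF sh x0(1) elim b] x0(2) by linarith
  qed
qed

lemma sh_ratio:
  assumes sh: "strongly_hyperbolic f"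
  shows "((\<lambda>x. deriv f (x + s) / deriv f x) \<longlongrightarrow> 1) at_top"
proof (cases "s > 0")
  case True
  from tendsto_inverse[OF sh_part1[OF sh True]] show ?thesis by (simp add: inverse_divide)
next
  case False
  show ?thesis
  proof (cases "s = 0")
    case True
    have "eventually (\<lambda>x. 1 = deriv f (x + s) / deriv f x) at_top"
      using eventually_gt_at_top[of 0] by eventually_elim (use sh_Dneg[OF sh] True in force)
    thus ?thesis by (rule tendsto_eventually[OF eventually_mono]) auto
  next
    case False2: False
    hence "- s > 0" using False by simp
    from shift_lim[OF sh_part1[OF sh this], of s] show ?thesis by simp
  qed
qed

lemma sh_chord:
  assumes sh: "strongly_hyperbolic f" and x: "x > 0" and xs: "x + s > 0"
  shows "deriv f x * s \<le> f (x + s) - f x" "f (x + s) - f x \<le> deriv f (x + s) * s"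
  using sh_tangent[OF sh x xs] sh_tangent[OF sh xs x] by (simp_all add: algebra_simps)

lemma sh_part3:
  assumes sh: "strongly_hyperbolic f"
  shows "((\<lambda>x. (f (x + s) - f x) / deriv f x) \<longlongrightarrow> s) at_top"
proof (rule tendsto_sandwich)
  show "\<forall>\<^sub>F x in at_top. s * (deriv f (x + s) / deriv f x) \<le> (f (x + s) - f x) / deriv f x"
    using eventually_gt_at_top[of "\<bar>s\<bar>"]
  proof eventually_elim
    case (elim x)
    have x: "x > 0" and xs: "x + s > 0" using elim by auto
    have n: "deriv f x < 0" using sh_Dneg[OF sh x] .
    have "f (x + s) - f x \<le> deriv f (x + s) * s" by (rule sh_chord(2)[OF sh x xs])
    hence "deriv f (x + s) * s / deriv f x \<le> (f (x + s) - f x) / deriv f x"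
      using n by (intro divide_right_mono_neg) auto
    thus ?case by (simp add: mult.commute)
  qed
  show "\<forall>\<^sub>F x in at_top. (f (x + s) - f x) / deriv f x \<le> s"
    using eventually_gt_at_top[of "\<bar>s\<bar>"]
  proof eventually_elim
    case (elim x)
    have x: "x > 0" and xs: "x + s > 0" using elim by auto
    have n: "deriv f x < 0" using sh_Dneg[OF sh x] .
    have "deriv f x * s \<le> f (x + s) - f x" by (rule sh_chord(1)[OF sh x xs])
    thus ?case using n by (simp add: divide_le_eq mult.commute)
  qed
  show "((\<lambda>x. s * (deriv f (x + s) / deriv f x)) \<longlongrightarrow> s) at_top"
    using tendsto_mult[OF tendsto_const sh_ratio[OF sh], of s s] by simp
qed simp

lemma sh_part2:
  assumes sh: "strongly_hyperbolic f"
  shows "((\<lambda>x. deriv f x / f x) \<longlongrightarrow> 0) at_top"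
proof (rule tendsto_sandwich)
  show "\<forall>\<^sub>F x in at_top. 1 - f (x + -1) / f x \<le> deriv f x / f x"
    using eventually_gt_at_top[of 1]
  proof eventually_elim
    case (elim x)
    have x: "x > 0" and xs: "x + -1 > 0" using elim by auto
    have p: "f x > 0" using sh_pos[OF sh x] .
    have "deriv f x * -1 \<le> f (x + -1) - f x" by (rule sh_chord(1)[OF sh x xs])
    hence "f x - f (x + -1) \<le> deriv f x" by simp
    hence "(f x - f (x + -1)) / f x \<le> deriv f x / f x" using p by (intro divide_right_mono) auto
    thus ?case using p by (simp add: diff_divide_distrib)
  qed
  show "\<forall>\<^sub>F x in at_top. deriv f x / f x \<le> 0"
    using eventually_gt_at_top[of 0]
    by eventually_elim (use sh_Dneg[OF sh] sh_pos[OF sh] in \<open>force intro: divide_nonpos_pos less_imp_le\<close>)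
  show "((\<lambda>x. 1 - f (x + -1) / f x) \<longlongrightarrow> 0) at_top"
    using tendsto_diff[OF tendsto_const sh_shift_ratio[OF sh, of "-1"], of 1] by simp
qed simp

lemma sh_part5:
  assumes sh: "strongly_hyperbolic f"
  shows "Liminf (at_right 0) (\<lambda>x. ereal (deriv f x / f x)) = -\<infinity>"
proof (rule ccontr)
  assume ne: "Liminf (at_right 0) (\<lambda>x. ereal (deriv f x / f x)) \<noteq> -\<infinity>"
  then obtain y :: real where y: "ereal y < Liminf (at_right 0) (\<lambda>x. ereal (deriv f x / f x))"
    using ereal_dense2[of "-\<infinity>"] by (auto simp: ereal_MInfty_lessI)
  have "eventually (\<lambda>x. ereal y < ereal (deriv f x / f x)) (at_right 0)"
    using le_Liminf_iff[THEN iffD1, OF order_refl] y by blast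
  then obtain d :: real where d: "d > 0" "\<And>x. x > 0 \<Longrightarrow> x < d \<Longrightarrow> y < deriv f x / f x"
    unfolding eventually_at_right[of 0 1, OF zero_less_one] by auto
  define c where "c = d / 2"
  have c: "c > 0" "c < d" using d by (auto simp: c_def)
  define k where "k = (\<lambda>x. ln (f x) - y * x)"
  have kder: "(k has_real_derivative (1 / f x * deriv f x - y)) (at x)" if x: "x > 0" for x
    unfolding k_def
    by (intro DERIV_diff DERIV_chain2[OF DERIV_ln_divide[OF sh_pos[OF sh x]] sh_deriv[OF sh x]])
       (auto intro!: derivative_eq_intros)
  have kle: "k x \<le> k c" if x: "x > 0" "x \<le> c" for x
  proof (rule DERIV_nonneg_imp_nondecreasing[OF x(2)])
    fix z assume z: "x \<le> z" "z \<le> c"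
    hence zp: "z > 0" "z < d" using x c by auto
    have "y < deriv f z / f z" using d(2)[OF zp] .
    hence "1 / f z * deriv f z - y \<ge> 0" by simp
    thus "\<exists>y. (k has_real_derivative y) (at z) \<and> 0 \<le> y" using kder[OF zp(1)] by blast
  qed
  define K where "K = ln (f c) + \<bar>y\<bar> * c"
  have fb: "f x \<le> exp K" if x: "x > 0" "x < c" for x
  proof -
    have "ln (f x) - y * x \<le> ln (f c) - y * c" using kle[of x] x unfolding k_def by simp
    moreover have "y * x - y * c \<le> \<bar>y\<bar> * c"
    proof -
      have "y * x - y * c = y * (x - c)" by (simp add: algebra_simps)
      also have "\<dots> \<le> \<bar>y\<bar> * \<bar>x - c\<bar>" by (metis abs_ge_self abs_mult)
      also have "\<dots> \<le> \<bar>y\<bar> * c" using x by (intro mult_left_mono) auto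
      finally show ?thesis .
    qed
    ultimately have "ln (f x) \<le> K" unfolding K_def by linarith
    thus ?thesis using sh_pos[OF sh x(1)] by (metis exp_ln exp_le_cancel_iff)
  qed
  have "eventually (\<lambda>x. f x > exp K) (at_right 0)"
    using sh unfolding strongly_hyperbolic_def filterlim_at_top_dense by auto
  moreover have "eventually (\<lambda>x. x \<in> {0<..<c}) (at_right 0)" by (rule eventually_at_right_real[OF c(1)])
  ultimately have "eventually (\<lambda>x. False) (at_right (0::real))"
    by eventually_elim (use fb in force)
  thus False by simp
qed

theorem lemma3p2:
  fixes f :: "real \<Rightarrow> real" and b s t :: real
  assumes "strongly_hyperbolic f" and "b > 0" and "s \<noteq> 0" and "t \<noteq> 0"
  shows "((\<lambda>x. deriv f x / deriv f (x + b)) \<longlongrightarrow> 1) at_top \<and>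
     ((\<lambda>x. deriv f x / f x) \<longlongrightarrow> 0) at_top \<and>
     ((\<lambda>x. (f (x + s) - f x) / deriv f x) \<longlongrightarrow> s) at_top \<and>
     ((\<lambda>x. (f (x + s) - f x) / (f (x + t) - f x)) \<longlongrightarrow> s / t) at_top \<and>
     Liminf (at_right 0) (\<lambda>x. ereal (deriv f x / f x)) = -\<infinity>"
proof (intro conjI)
  note sh = assms(1)
  show "((\<lambda>x. deriv f x / deriv f (x + b)) \<longlongrightarrow> 1) at_top" by (rule sh_part1[OF sh assms(2)])
  show "((\<lambda>x. deriv f x / f x) \<longlongrightarrow> 0) at_top" by (rule sh_part2[OF sh])
  show "((\<lambda>x. (f (x + s) - f x) / deriv f x) \<longlongrightarrow> s) at_top" by (rule sh_part3[OF sh])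
  show "Liminf (at_right 0) (\<lambda>x. ereal (deriv f x / f x)) = -\<infinity>" by (rule sh_part5[OF sh])
  have lim: "((\<lambda>x. ((f (x + s) - f x) / deriv f x) / ((f (x + t) - f x) / deriv f x)) \<longlongrightarrow> s / t) at_top"
    by (rule tendsto_divide[OF sh_part3[OF sh] sh_part3[OF sh] assms(4)])
  have "eventually (\<lambda>x. ((f (x + s) - f x) / deriv f x) / ((f (x + t) - f x) / deriv f x)
      = (f (x + s) - f x) / (f (x + t) - f x)) at_top"
    using eventually_gt_at_top[of 0]
    by eventually_elim (use sh_Dneg[OF sh] in \<open>force simp: divide_simps\<close>)
  from tendsto_cong[OF this] lim
  show "((\<lambda>x. (f (x + s) - f x) / (f (x + t) - f x)) \<longlongrightarrow> s / t) at_top" by simp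
qed

end
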